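(* Let $\mathsf{\Sigma}\in\mathbb{R}^{N\times N_S}$ and $\mathsf{\Lambda}\in\mathbb{R}^{N\times N_L}$ be the Star-to-RWG and Loop-to-RWG matrices of a triangular surface mesh, and let $\mathsf{\Sigma}_n=\mathsf{\Sigma}(\mathsf{\Sigma}^{\mathrm T}\mathsf{\Sigma})^+(\mathsf{\Sigma}^{\mathrm T}\mathsf{\Sigma})_n$ and $\mathsf{\Lambda}_n=\mathsf{\Lambda}(\mathsf{\Lambda}^{\mathrm T}\mathsf{\Lambda})^+(\mathsf{\Lambda}^{\mathrm T}\mathsf{\Lambda})_n$ be the filtered Star and Loop matrices (see context). Then for all $1\le n,m\le N_S$, $$\mathsf{\Sigma}_m^{\mathrm T}\mathsf{\Sigma}_n=\mathsf{\Sigma}_{\min\{n,m\}}^{\mathrm T}\mathsf{\Sigma}_{\min\{n,m\}},$$ and for all $1\le n,m\le N_L$, $$\mathsf{\Lambda}_m^{\mathrm T}\mathsf{\Lambda}_n=\mathsf{\Lambda}_{\min\{n,m\}}^{\mathrm T}\mathsf{\Lambda}_{\min\{n,m\}}.$$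
   Context: Consider a closed triangulated surface with $N$ edges, $N_S$ triangles and $N_L$ vertices. Each edge $m$ is shared by two triangles $c_m^+$, $c_m^-$. $[\mathsf{\Sigma}]_{mn}=1$ if cell $n$ is $c_m^+$, $-1$ if cell $n$ is $c_m^-$, $0$ otherwise. $[\mathsf{\Lambda}]_{mn}=\pm1$ when vertex $n$ is an endpoint of edge $m$ (opposite signs for the two endpoints, fixed by the orientation convention), $0$ otherwise. $^+$ denotes the Moore–Penrose pseudo-inverse. For $\mathsf{X}\in\{\mathsf{\Sigma},\mathsf{\Lambda}\}$ with $N_x$ columns, fix an SVD $\mathsf{X}=\mathsf{U}_X\mathsf{S}_X\mathsf{V}_X^{\mathrm T}$ with $\mathsf{V}_X$ orthogonal $N_x\times N_x$ and singular values $\sigma_{X,1}\ge\dots\ge\sigma_{X,N_x}\ge0$, so $\mathsf{X}^{\mathrm T}\mathsf{X}=\mathsf{V}_X\mathrm{diag}(\sigma_{X,i}^2)\mathsf{V}_X^{\mathrm T}$. For $1\le n\le N_x$, $\mathsf{L}_{X,n}$ is diagonal with $[\mathsf{L}_{X,n}]_{ii}=\sigma_{X,i}$ if $i>N_x-n$ and $0$ otherwise, and $(\mathsf{X}^{\mathrm T}\mathsf{X})_n=\mathsf{V}_X\mathsf{L}_{X,n}^2\mathsf{V}_X^{\mathrm T}$ (filtered graph Laplacian). *)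

theory Defs
  imports "Jordan_Normal_Form.Matrix"
begin

text \<open>Matrices are Jordan_Normal_Form matrices over the reals with explicit dimensions.
  Indices are 0-based: edges 0..<N, triangles 0..<NS, vertices 0..<NL.\<close>

definition pinv :: "real mat \<Rightarrow> real mat" where
  "pinv A = (THE B. B \<in> carrier_mat (dim_col A) (dim_row A) \<and>
       A * B * A = A \<and> B * A * B = B \<and>
       transpose_mat (A * B) = A * B \<and> transpose_mat (B * A) = B * A)"

definition orth_mat :: "nat \<Rightarrow> real mat \<Rightarrow> bool" where
  "orth_mat n Q \<longleftrightarrow> Q \<in> carrier_mat n n \<and>
     transpose_mat Q * Q = 1\<^sub>m n \<and> Q * transpose_mat Q = 1\<^sub>m n"

text \<open>A fixed SVD X = U S V^T of the r x k matrix X, with singular values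
  sigma 0 \<ge> sigma 1 \<ge> ... \<ge> sigma (k-1) \<ge> 0 (0-based version of
  sigma_1 \<ge> ... \<ge> sigma_{N_x}); S is r x k with S_ii = sigma i and zero elsewhere
  (for r \<ge> k, as for the Star/Loop matrices; entries with index \<ge> r are ignored).\<close>
definition is_svd :: "nat \<Rightarrow> nat \<Rightarrow> real mat \<Rightarrow> real mat \<Rightarrow> real mat \<Rightarrow> real mat
    \<Rightarrow> (nat \<Rightarrow> real) \<Rightarrow> bool" where
  "is_svd r k X U S V \<sigma> \<longleftrightarrow>
     X \<in> carrier_mat r k \<and> orth_mat r U \<and> orth_mat k V \<and>
     S = mat r k (\<lambda>(i,j). if i = j then \<sigma> i else 0) \<and>
     X = U * S * transpose_mat V \<and>
     (\<forall>i<k. 0 \<le> \<sigma> i) \<and> (\<forall>i j. i \<le> j \<and> j < k \<longrightarrow> \<sigma> j \<le> \<sigma> i)"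

text \<open>L_{X,n}: diagonal k x k, entry (i,i) equals sigma i iff (1-based) i+1 > k - n.\<close>
definition Lmat :: "nat \<Rightarrow> (nat \<Rightarrow> real) \<Rightarrow> nat \<Rightarrow> real mat" where
  "Lmat k \<sigma> n = mat k k (\<lambda>(i,j). if i = j \<and> k - n \<le> i then \<sigma> i else 0)"

definition filtered_gram :: "nat \<Rightarrow> real mat \<Rightarrow> (nat \<Rightarrow> real) \<Rightarrow> nat \<Rightarrow> real mat" where
  "filtered_gram k V \<sigma> n = V * (Lmat k \<sigma> n * Lmat k \<sigma> n) * transpose_mat V"

definition filtered_mat :: "nat \<Rightarrow> real mat \<Rightarrow> real mat \<Rightarrow> (nat \<Rightarrow> real) \<Rightarrow> nat \<Rightarrow> real mat" where
  "filtered_mat k X V \<sigma> n = X * pinv (transpose_mat X * X) * filtered_gram k V \<sigma> n"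

text \<open>Closed triangulated surface (combinatorial data): NL vertices, NS triangles
  (3-element vertex sets), N edges (2-element vertex sets, pairwise distinct);
  every side of every triangle is an edge; edge m lies in exactly the two distinct
  triangles cp m (= c_m^+) and cm m (= c_m^-); its endpoints are vp m and vm m,
  where vp m gets sign +1 and vm m sign -1 in Lambda (orientation convention).\<close>
definition tri_surface ::
  "nat \<Rightarrow> nat \<Rightarrow> nat \<Rightarrow> (nat \<Rightarrow> nat set) \<Rightarrow> (nat \<Rightarrow> nat set) \<Rightarrow>
   (nat \<Rightarrow> nat) \<Rightarrow> (nat \<Rightarrow> nat) \<Rightarrow> (nat \<Rightarrow> nat) \<Rightarrow> (nat \<Rightarrow> nat) \<Rightarrow> bool" where
  "tri_surface N NS NL tri edge cp cm vp vm \<longleftrightarrow>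
     (\<forall>c<NS. tri c \<subseteq> {..<NL} \<and> card (tri c) = 3) \<and>
     inj_on tri {..<NS} \<and> inj_on edge {..<N} \<and>
     (\<forall>m<N. vp m < NL \<and> vm m < NL \<and> vp m \<noteq> vm m \<and> edge m = {vp m, vm m}) \<and>
     (\<forall>m<N. cp m < NS \<and> cm m < NS \<and> cp m \<noteq> cm m \<and>
        {c. c < NS \<and> edge m \<subseteq> tri c} = {cp m, cm m}) \<and>
     (\<forall>c<NS. \<forall>e. e \<subseteq> tri c \<and> card e = 2 \<longrightarrow> (\<exists>m<N. edge m = e))"

definition star_mat :: "nat \<Rightarrow> nat \<Rightarrow> (nat \<Rightarrow> nat) \<Rightarrow> (nat \<Rightarrow> nat) \<Rightarrow> real mat" where
  "star_mat N NS cp cm = mat N NS (\<lambda>(m,n). if n = cp m then 1 else if n = cm m then -1 else 0)"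

definition loop_mat :: "nat \<Rightarrow> nat \<Rightarrow> (nat \<Rightarrow> nat) \<Rightarrow> (nat \<Rightarrow> nat) \<Rightarrow> real mat" where
  "loop_mat N NL vp vm = mat N NL (\<lambda>(m,n). if n = vp m then 1 else if n = vm m then -1 else 0)"

end

theory Submission
  imports Defs
begin

lemma sq_assoc: "X \<in> carrier_mat n n \<Longrightarrow> Y \<in> carrier_mat n n \<Longrightarrow> Z \<in> carrier_mat n n
  \<Longrightarrow> X * Y * Z = X * (Y * (Z :: real mat))" by simp
lemma sq_mult: "X \<in> carrier_mat n n \<Longrightarrow> Y \<in> carrier_mat n n \<Longrightarrow> X * (Y :: real mat) \<in> carrier_mat n n"
  by simp
lemma sq_tr: "X \<in> carrier_mat n n \<Longrightarrow> transpose_mat (X :: real mat) \<in> carrier_mat n n"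
  by simp

lemma pinv_unique:
  fixes A B C :: "real mat"
  assumes A: "A \<in> carrier_mat k k" and B: "B \<in> carrier_mat k k" and C: "C \<in> carrier_mat k k"
  and b1: "A * B * A = A" and b2: "B * A * B = B" and b3: "transpose_mat (A * B) = A * B"
  and b4: "transpose_mat (B * A) = B * A"
  and c1: "A * C * A = A" and c2: "C * A * C = C" and c3: "transpose_mat (A * C) = A * C"
  and c4: "transpose_mat (C * A) = C * A"
  shows "B = C"
proof -
  have AB: "A * B \<in> carrier_mat k k" and AC: "A * C \<in> carrier_mat k k"
    and BA: "B * A \<in> carrier_mat k k" and CA: "C * A \<in> carrier_mat k k" using A B C by auto
  have TCA: "transpose_mat C * transpose_mat A \<in> carrier_mat k k"
   and TBA: "transpose_mat B * transpose_mat A \<in> carrier_mat k k"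
   and TAB: "transpose_mat A * transpose_mat B \<in> carrier_mat k k"
   and TAC: "transpose_mat A * transpose_mat C \<in> carrier_mat k k" using A B C by auto
  have TA: "transpose_mat A \<in> carrier_mat k k" and TB: "transpose_mat B \<in> carrier_mat k k"
    and TC: "transpose_mat C \<in> carrier_mat k k" using A B C by auto
  have t3: "transpose_mat B * transpose_mat A = A * B" using b3 transpose_mult[OF A B] by simp
  have t3': "transpose_mat C * transpose_mat A = A * C" using c3 transpose_mult[OF A C] by simp
  have t4: "transpose_mat A * transpose_mat B = B * A" using b4 transpose_mult[OF B A] by simp
  have t4': "transpose_mat A * transpose_mat C = C * A" using c4 transpose_mult[OF C A] by simp
  have tA1: "transpose_mat A = transpose_mat A * transpose_mat C * transpose_mat A"
  proof -
    have "transpose_mat A = transpose_mat (A * C * A)" using c1 by simp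
    also have "\<dots> = transpose_mat A * transpose_mat (A * C)" using transpose_mult[OF AC A] .
    also have "\<dots> = transpose_mat A * (transpose_mat C * transpose_mat A)" using transpose_mult[OF A C] by simp
    finally show ?thesis using A C by simp
  qed
  have tA2: "transpose_mat A = transpose_mat A * transpose_mat B * transpose_mat A"
  proof -
    have "transpose_mat A = transpose_mat (A * B * A)" using b1 by simp
    also have "\<dots> = transpose_mat A * transpose_mat (A * B)" using transpose_mult[OF AB A] .
    also have "\<dots> = transpose_mat A * (transpose_mat B * transpose_mat A)" using transpose_mult[OF A B] by simp
    finally show ?thesis using A B by simp
  qed
  have "B = B * (A * B)" using b2 A B by simp
  also have "\<dots> = B * (transpose_mat B * transpose_mat A)" using t3 by simp
  also have "\<dots> = B * (transpose_mat B * (transpose_mat A * transpose_mat C * transpose_mat A))"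
    using tA1 by simp
  also have "\<dots> = B * ((transpose_mat B * transpose_mat A) * (transpose_mat C * transpose_mat A))"
    by (simp only: assoc_mult_mat[OF TB TA TCA] assoc_mult_mat[OF TA TC TA])
  also have "\<dots> = B * ((A * B) * (A * C))" using t3 t3' by simp
  also have "\<dots> = (B * A * B) * A * C" using A B C by (simp add: sq_assoc[where n=k] sq_mult[where n=k] sq_tr[where n=k])
  finally have eB: "B = B * A * C" using b2 by simp
  have "C = (C * A) * C" using c2 by simp
  also have "\<dots> = (transpose_mat A * transpose_mat C) * C" using t4' by simp
  also have "\<dots> = (transpose_mat A * transpose_mat B * transpose_mat A) * transpose_mat C * C" 
    using tA2 by simp
  also have "\<dots> = ((transpose_mat A * transpose_mat B) * (transpose_mat A * transpose_mat C)) * C"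
    by (simp only: assoc_mult_mat[OF TAB TA TC])
  also have "\<dots> = ((B * A) * (C * A)) * C" using t4 t4' by simp
  also have "\<dots> = B * A * (C * A * C)" using A B C by (simp add: sq_assoc[where n=k] sq_mult[where n=k] sq_tr[where n=k])
  finally have "C = B * A * C" using c2 by simp
  with eB show ?thesis by simp
qed

definition dg :: "nat \<Rightarrow> (nat \<Rightarrow> real) \<Rightarrow> real mat" where
  "dg k f = mat k k (\<lambda>(i,j). if i = j then f i else 0)"

lemma dg_carrier[simp]: "dg k f \<in> carrier_mat k k" by (simp add: dg_def)
lemma dg_dims[simp]: "dim_row (dg k f) = k" "dim_col (dg k f) = k" by (simp_all add: dg_def)

lemma dg_mult: "dg k f * dg k g = dg k (\<lambda>i. f i * g i)"
proof (rule eq_matI)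
  fix i j assume i: "i < dim_row (dg k (\<lambda>i. f i * g i))" and j: "j < dim_col (dg k (\<lambda>i. f i * g i))"
  hence ik: "i < k" and jk: "j < k" by (auto simp: dg_def)
  have "(dg k f * dg k g) $$ (i, j) = (\<Sum>l\<in>{0..<k}. (if i = l then f i else 0) * (if l = j then g l else 0))"
    using ik jk by (simp add: dg_def scalar_prod_def)
  also have "\<dots> = (\<Sum>l\<in>{0..<k}. if l = i then (if i = j then f i * g i else 0) else 0)"
    by (rule sum.cong) auto
  also have "\<dots> = (if i = j then f i * g i else 0)" using ik by simp
  finally show "(dg k f * dg k g) $$ (i, j) = dg k (\<lambda>i. f i * g i) $$ (i, j)"
    using ik jk by (simp add: dg_def)
qed (auto simp: dg_def)

lemma dg_tr: "transpose_mat (dg k f) = dg k f"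
  by (rule eq_matI) (auto simp: dg_def)

definition wv :: "nat \<Rightarrow> real mat \<Rightarrow> (nat \<Rightarrow> real) \<Rightarrow> real mat" where
  "wv k V f = V * dg k f * transpose_mat V"

lemma wv_carrier: "orth_mat k V \<Longrightarrow> wv k V f \<in> carrier_mat k k"
  unfolding wv_def orth_mat_def by auto

lemma wv_mult: assumes "orth_mat k V" shows "wv k V f * wv k V g = wv k V (\<lambda>i. f i * g i)"
proof -
  have V: "V \<in> carrier_mat k k" and o: "transpose_mat V * V = 1\<^sub>m k" using assms by (auto simp: orth_mat_def)
  have TV: "transpose_mat V \<in> carrier_mat k k" using V by simp
  have "wv k V f * wv k V g = V * (dg k f * ((transpose_mat V * V) * (dg k g * transpose_mat V)))"
    unfolding wv_def using V TV by (simp add: sq_assoc[where n=k] sq_mult[where n=k] dg_carrier)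
  also have "\<dots> = V * ((dg k f * dg k g) * transpose_mat V)" using o V TV
    by (simp add: sq_assoc[where n=k] sq_mult[where n=k] dg_carrier)
  finally show ?thesis unfolding wv_def dg_mult using V TV by (simp add: sq_assoc[where n=k] sq_mult[where n=k] dg_carrier)
qed

lemma wv_tr: assumes "orth_mat k V" shows "transpose_mat (wv k V f) = wv k V f"
proof -
  have V: "V \<in> carrier_mat k k" using assms by (auto simp: orth_mat_def)
  have TV: "transpose_mat V \<in> carrier_mat k k" using V by simp
  have "transpose_mat (wv k V f) = transpose_mat (transpose_mat V) * transpose_mat (V * dg k f)"
    unfolding wv_def by (rule transpose_mult[OF sq_mult[OF V dg_carrier] TV])
  also have "\<dots> = V * (dg k f * transpose_mat V)"
    using transpose_mult[OF V dg_carrier, of f] by (simp add: dg_tr)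
  finally show ?thesis unfolding wv_def using V TV by (simp add: sq_assoc[where n=k] dg_carrier)
qed


lemma sts: assumes "S = mat r k (\<lambda>(i,j). if i = j then \<sigma> i else 0)"
  shows "transpose_mat S * S = dg k (\<lambda>i. if i < r then \<sigma> i ^ 2 else 0)"
proof (rule eq_matI)
  fix i j assume i: "i < dim_row (dg k (\<lambda>i. if i < r then \<sigma> i ^ 2 else 0))"
    and j: "j < dim_col (dg k (\<lambda>i. if i < r then \<sigma> i ^ 2 else 0))"
  hence ik: "i < k" and jk: "j < k" by auto
  have "(transpose_mat S * S) $$ (i, j) = (\<Sum>l\<in>{0..<r}. (if l = i then \<sigma> l else 0) * (if l = j then \<sigma> l else 0))"
    using ik jk assms by (simp add: scalar_prod_def)
  also have "\<dots> = (\<Sum>l\<in>{0..<r}. if l = i then (if i = j then \<sigma> i ^ 2 else 0) else 0)"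
    by (rule sum.cong) (auto simp: power2_eq_square)
  also have "\<dots> = (if i < r then (if i = j then \<sigma> i ^ 2 else 0) else 0)" by simp
  finally show "(transpose_mat S * S) $$ (i, j) = dg k (\<lambda>i. if i < r then \<sigma> i ^ 2 else 0) $$ (i, j)"
    using ik jk by (auto simp: dg_def)
qed (auto simp: assms)

lemma gram: assumes "is_svd r k X U S V \<sigma>"
  shows "transpose_mat X * X = wv k V (\<lambda>i. if i < r then \<sigma> i ^ 2 else 0)"
proof -
  have X: "X = U * S * transpose_mat V" and Sd: "S = mat r k (\<lambda>(i,j). if i = j then \<sigma> i else 0)"
    and U: "U \<in> carrier_mat r r" and oU: "transpose_mat U * U = 1\<^sub>m r"
    and V: "V \<in> carrier_mat k k"
    using assms by (auto simp: is_svd_def orth_mat_def)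
  have S: "S \<in> carrier_mat r k" using Sd by simp
  have TV: "transpose_mat V \<in> carrier_mat k k" using V by simp
  have TU: "transpose_mat U \<in> carrier_mat r r" using U by simp
  have TS: "transpose_mat S \<in> carrier_mat k r" using S by simp
  have SV: "S * transpose_mat V \<in> carrier_mat r k" using S TV by simp
  have USV: "U * (S * transpose_mat V) \<in> carrier_mat r k" using U SV by simp
  have STU: "transpose_mat S * transpose_mat U \<in> carrier_mat k r" using TS TU by simp
  have X': "X = U * (S * transpose_mat V)" using X assoc_mult_mat[OF U S TV] by simp
  have XT: "transpose_mat X = V * (transpose_mat S * transpose_mat U)"
    unfolding X' using transpose_mult[OF U SV] transpose_mult[OF S TV] assoc_mult_mat[OF V TS TU] by simp
  have "transpose_mat X * X = V * ((transpose_mat S * transpose_mat U) * (U * (S * transpose_mat V)))"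
    unfolding XT X'[symmetric] using assoc_mult_mat[OF V STU, of X k] X' USV by simp
  also have "(transpose_mat S * transpose_mat U) * (U * (S * transpose_mat V))
     = transpose_mat S * ((transpose_mat U * U) * (S * transpose_mat V))"
    using assoc_mult_mat[OF TS TU USV] assoc_mult_mat[OF TU U SV] by simp
  also have "\<dots> = (transpose_mat S * S) * transpose_mat V" using oU SV TS S TV by simp
  finally show ?thesis unfolding wv_def sts[OF Sd]
    using V TV by (simp add: sq_assoc[where n=k] dg_carrier)
qed


lemma pinv_wv: assumes o: "orth_mat k V" shows "pinv (wv k V d) = wv k V (\<lambda>i. inverse (d i))"
proof -
  let ?A = "wv k V d" and ?B = "wv k V (\<lambda>i. inverse (d i))"
  have A: "?A \<in> carrier_mat k k" and B: "?B \<in> carrier_mat k k" using wv_carrier[OF o] by auto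
  have e1: "(\<lambda>i. d i * inverse (d i) * d i) = d"
    by (rule ext) (case_tac "d i = 0", auto)
  have e2: "(\<lambda>i. inverse (d i) * d i * inverse (d i)) = (\<lambda>i. inverse (d i))"
    by (rule ext) (case_tac "d i = 0", auto)
  have e3: "(\<lambda>i. inverse (d i) * d i) = (\<lambda>i. d i * inverse (d i))" by (auto simp: mult.commute)
  have P: "?B \<in> carrier_mat (dim_col ?A) (dim_row ?A) \<and> ?A * ?B * ?A = ?A \<and> ?B * ?A * ?B = ?B \<and>
       transpose_mat (?A * ?B) = ?A * ?B \<and> transpose_mat (?B * ?A) = ?B * ?A"
    using A B by (simp add: wv_mult[OF o] wv_tr[OF o] e1 e2)
  show ?thesis unfolding pinv_def
  proof (rule the_equality)
    fix C assume C: "C \<in> carrier_mat (dim_col ?A) (dim_row ?A) \<and> ?A * C * ?A = ?A \<and> C * ?A * C = C \<and>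
       transpose_mat (?A * C) = ?A * C \<and> transpose_mat (C * ?A) = C * ?A"
    have Ck: "C \<in> carrier_mat k k" using C A by auto
    show "C = ?B" using pinv_unique[OF A Ck B] C P by blast
  qed (rule P)
qed

lemma Lmat_dg: "Lmat k \<sigma> n = dg k (\<lambda>i. if k - n \<le> i then \<sigma> i else 0)"
  by (rule eq_matI) (auto simp: Lmat_def dg_def)

lemma fgram: "filtered_gram k V \<sigma> n = wv k V (\<lambda>i. (if k - n \<le> i then \<sigma> i else 0) * (if k - n \<le> i then \<sigma> i else 0))"
  unfolding filtered_gram_def wv_def Lmat_dg dg_mult ..

lemma gen: assumes svd: "is_svd r k X U S V \<sigma>"
  shows "transpose_mat (filtered_mat k X V \<sigma> m) * filtered_mat k X V \<sigma> n
   = transpose_mat (filtered_mat k X V \<sigma> (min n m)) * filtered_mat k X V \<sigma> (min n m)"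
proof -
  have o: "orth_mat k V" and X: "X \<in> carrier_mat r k" using svd by (auto simp: is_svd_def)
  define d where "d = (\<lambda>i. if i < r then \<sigma> i ^ 2 else 0)"
  define b where "b = (\<lambda>i. inverse (d i))"
  define l where "l = (\<lambda>n i. (if k - n \<le> i then \<sigma> i else 0) * (if k - n \<le> i then \<sigma> i else 0))"
  have A: "transpose_mat X * X = wv k V d" using gram[OF svd] unfolding d_def .
  have pv: "pinv (transpose_mat X * X) = wv k V b" unfolding A b_def by (rule pinv_wv[OF o])
  have key: "transpose_mat (filtered_mat k X V \<sigma> m) * filtered_mat k X V \<sigma> n
      = wv k V (\<lambda>i. l m i * b i * d i * b i * l n i)" for m n
  proof -
    let ?Wb = "wv k V b" and ?Gm = "wv k V (l m)" and ?Gn = "wv k V (l n)"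
    have Wb: "?Wb \<in> carrier_mat k k" and Gm: "?Gm \<in> carrier_mat k k" and Gn: "?Gn \<in> carrier_mat k k"
      using wv_carrier[OF o] by auto
    have XT: "transpose_mat X \<in> carrier_mat k r" using X by simp
    have XWb: "X * ?Wb \<in> carrier_mat r k" using X Wb by simp
    have XWbGn: "X * ?Wb * ?Gn \<in> carrier_mat r k" using XWb Gn by simp
    have GmWb: "?Gm * ?Wb \<in> carrier_mat k k" using Gm Wb by simp
    have F: "filtered_mat k X V \<sigma> p = X * ?Wb * wv k V (l p)" for p
      unfolding filtered_mat_def pv fgram l_def ..
    have FT: "transpose_mat (filtered_mat k X V \<sigma> m) = ?Gm * (?Wb * transpose_mat X)"
      unfolding F using transpose_mult[OF XWb Gm] transpose_mult[OF X Wb] wv_tr[OF o] by simp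
    have "transpose_mat (filtered_mat k X V \<sigma> m) * filtered_mat k X V \<sigma> n
        = (?Gm * (?Wb * transpose_mat X)) * (X * ?Wb * ?Gn)" by (simp only: FT F[of n])
    also have "\<dots> = (?Gm * ?Wb) * (transpose_mat X * (X * ?Wb * ?Gn))"
      using assoc_mult_mat[OF Gm Wb XT] assoc_mult_mat[OF GmWb XT XWbGn] by simp
    also have "transpose_mat X * (X * ?Wb * ?Gn) = ((transpose_mat X * X) * ?Wb) * ?Gn"
      using assoc_mult_mat[OF XT XWb Gn] assoc_mult_mat[OF XT X Wb] by simp
    finally show ?thesis unfolding A by (simp add: wv_mult[OF o] mult.assoc)
  qed
  have fe: "(\<lambda>i. l m i * b i * d i * b i * l n i) = (\<lambda>i. l (min n m) i * b i * d i * b i * l (min n m) i)"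
    by (rule ext) (auto simp: l_def min_def)
  show ?thesis unfolding key fe ..
qed

theorem mainTheorem2:
  fixes N NS NL :: nat
    and tri edge :: "nat \<Rightarrow> nat set"
    and cp cm vp vm :: "nat \<Rightarrow> nat"
    and US SS VS UL SL VL :: "real mat"
    and \<sigma>S \<sigma>L :: "nat \<Rightarrow> real"
  assumes surf: "tri_surface N NS NL tri edge cp cm vp vm"
    and svdS: "is_svd N NS (star_mat N NS cp cm) US SS VS \<sigma>S"
    and svdL: "is_svd N NL (loop_mat N NL vp vm) UL SL VL \<sigma>L"
  shows "(\<forall>n m. 1 \<le> n \<and> n \<le> NS \<and> 1 \<le> m \<and> m \<le> NS \<longrightarrow>
            transpose_mat (filtered_mat NS (star_mat N NS cp cm) VS \<sigma>S m)
              * filtered_mat NS (star_mat N NS cp cm) VS \<sigma>S n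
            = transpose_mat (filtered_mat NS (star_mat N NS cp cm) VS \<sigma>S (min n m))
              * filtered_mat NS (star_mat N NS cp cm) VS \<sigma>S (min n m))
       \<and> (\<forall>n m. 1 \<le> n \<and> n \<le> NL \<and> 1 \<le> m \<and> m \<le> NL \<longrightarrow>
            transpose_mat (filtered_mat NL (loop_mat N NL vp vm) VL \<sigma>L m)
              * filtered_mat NL (loop_mat N NL vp vm) VL \<sigma>L n
            = transpose_mat (filtered_mat NL (loop_mat N NL vp vm) VL \<sigma>L (min n m))
              * filtered_mat NL (loop_mat N NL vp vm) VL \<sigma>L (min n m))"
  using gen[OF svdS] gen[OF svdL] by blast

end
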